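(* Let $G$ be a Lie group, let $\mathcal{X}$ and $\mathcal{Y}$ be linear vector fields on $G$ with flows $(\varphi_t)$ and $(\psi_t)$, and suppose there is an automorphism $\pi:G\to G$ with $\pi(\varphi_t(x))=\psi_t(\pi(x))$ and $\varphi_t(\pi^{-1}(x))=\pi^{-1}(\psi_t(x))$ for all $t\in\mathbb{R}$, $x\in G$. Let $h:G\to G$ be a (continuous) homomorphism, $K=\ker(h)$, $S=\ker(h\circ\pi^{-1})$, and set $I_1=\{x\in G:\varphi_t(x)\in K\ \forall t\in\mathbb{R}\}$, $I_2=\{y\in G:\psi_t(y)\in S\ \forall t\in\mathbb{R}\}$. Then $I_1$ is discrete if and only if $I_2$ is discrete. Moreover, $\mathrm{Fix}(\varphi)\cap K=\{e\}$ if and only if $\mathrm{Fix}(\psi)\cap S=\{e\}$.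
   Context: A vector field on a Lie group $G$ is linear if its flow is a one-parameter subgroup of $\mathrm{Aut}(G)$. $\mathrm{Fix}(\varphi)=\{g\in G:\varphi_t(g)=g\ \forall t\in\mathbb{R}\}$ denotes the set of fixed points of the flow $\varphi$, and $e$ is the identity of $G$. *)

theory Defs
  imports "HOL-Analysis.Analysis" "HOL-Algebra.Coset"
begin

text \<open>A topological group: an HOL-Algebra group G together with a topology T on
  its carrier for which multiplication and inversion are continuous.
  (Stand-in for a Lie group; smooth structure is not available in the library.)\<close>
definition topological_group :: "('a, 'm) monoid_scheme \<Rightarrow> 'a topology \<Rightarrow> bool" where
  "topological_group G T \<longleftrightarrow> group G \<and> topspace T = carrier G \<and>
     continuous_map (prod_topology T T) T (\<lambda>(x, y). x \<otimes>\<^bsub>G\<^esub> y) \<and>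
     continuous_map T T (\<lambda>x. inv\<^bsub>G\<^esub> x)"

definition top_aut :: "('a, 'm) monoid_scheme \<Rightarrow> 'a topology \<Rightarrow> ('a \<Rightarrow> 'a) \<Rightarrow> bool" where
  "top_aut G T f \<longleftrightarrow> f \<in> iso G G \<and> homeomorphic_map T T f"

text \<open>Flow of a linear vector field: a (jointly continuous) one-parameter subgroup
  t \<mapsto> phi t of Aut(G).\<close>
definition linear_flow :: "('a, 'm) monoid_scheme \<Rightarrow> 'a topology \<Rightarrow> (real \<Rightarrow> 'a \<Rightarrow> 'a) \<Rightarrow> bool" where
  "linear_flow G T \<phi> \<longleftrightarrow>
     (\<forall>t. top_aut G T (\<phi> t)) \<and>
     (\<forall>x \<in> carrier G. \<phi> 0 x = x) \<and>
     (\<forall>s t. \<forall>x \<in> carrier G. \<phi> (s + t) x = \<phi> s (\<phi> t x)) \<and>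
     continuous_map (prod_topology euclideanreal T) T (\<lambda>(t, x). \<phi> t x)"

definition Fix :: "('a, 'm) monoid_scheme \<Rightarrow> (real \<Rightarrow> 'a \<Rightarrow> 'a) \<Rightarrow> 'a set" where
  "Fix G \<phi> = {g \<in> carrier G. \<forall>t. \<phi> t g = g}"

definition discrete_in :: "'a topology \<Rightarrow> 'a set \<Rightarrow> bool" where
  "discrete_in T A \<longleftrightarrow> subtopology T A = discrete_topology A"

end

theory Submission
  imports Defs
begin

lemma discrete_in_image:
  assumes f: "homeomorphic_map T T f" and A: "A \<subseteq> topspace T"
  shows "discrete_in T (f ` A) \<longleftrightarrow> discrete_in T A"
proof -
  have im: "f ` topspace T = topspace T" and inj: "inj_on f (topspace T)"
    using f by (auto simp: homeomorphic_eq_everything_map)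
  have fA: "f ` A \<subseteq> topspace T" using A im by auto
  have "f ` (topspace T \<inter> A) = topspace T \<inter> f ` A"
    using A fA by (simp add: Int_absorb1)
  then have hm: "homeomorphic_map (subtopology T A) (subtopology T (f ` A)) f"
    using homeomorphic_map_subtopologies[OF f] by blast
  have tA: "topspace (subtopology T A) = A" using A by (simp add: Int_absorb1)
  have tB: "topspace (subtopology T (f ` A)) = f ` A" using fA by (simp add: Int_absorb1)
  have op: "openin (subtopology T (f ` A)) {f x} \<longleftrightarrow> openin (subtopology T A) {x}" if "x \<in> A" for x
    using homeomorphic_map_openness[OF hm, of "{x}"] that tA by auto
  show ?thesis
    unfolding discrete_in_def
    using op tA tB
    by (metis (no_types, lifting) discrete_topology_unique imageE image_eqI)
qed

theorem corollary2p7: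
  fixes G :: "('a, 'm) monoid_scheme" and T :: "'a topology"
    and \<phi> \<psi> :: "real \<Rightarrow> 'a \<Rightarrow> 'a" and \<pi> h :: "'a \<Rightarrow> 'a"
  assumes "topological_group G T"
    and "linear_flow G T \<phi>" and "linear_flow G T \<psi>"
    and "top_aut G T \<pi>"
    and "\<And>t x. x \<in> carrier G \<Longrightarrow> \<pi> (\<phi> t x) = \<psi> t (\<pi> x)"
    and "\<And>t x. x \<in> carrier G \<Longrightarrow>
           \<phi> t (inv_into (carrier G) \<pi> x) = inv_into (carrier G) \<pi> (\<psi> t x)"
    and "h \<in> hom G G" and "continuous_map T T h"
  shows "(discrete_in T {x \<in> carrier G. \<forall>t. \<phi> t x \<in> kernel G G h}
            \<longleftrightarrow> discrete_in T {y \<in> carrier G. \<forall>t. \<psi> t y \<in> kernel G G (h \<circ> inv_into (carrier G) \<pi>)})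
       \<and> (Fix G \<phi> \<inter> kernel G G h = {\<one>\<^bsub>G\<^esub>}
            \<longleftrightarrow> Fix G \<psi> \<inter> kernel G G (h \<circ> inv_into (carrier G) \<pi>) = {\<one>\<^bsub>G\<^esub>})"
proof -
  define p' where "p' = inv_into (carrier G) \<pi>"
  have grp: "group G" and top: "topspace T = carrier G"
    using assms(1) by (auto simp: topological_group_def)
  have iso: "\<pi> \<in> iso G G" and hom\<pi>: "homeomorphic_map T T \<pi>"
    using assms(4) by (auto simp: top_aut_def)
  have bij: "bij_betw \<pi> (carrier G) (carrier G)" using iso by (simp add: iso_def)
  have pcar: "\<pi> x \<in> carrier G" if "x \<in> carrier G" for x using bij that bij_betwE by blast
  have p'car: "p' y \<in> carrier G" if "y \<in> carrier G" for y
    using bij that unfolding p'_def by (metis bij_betw_def inv_into_into)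
  have pp': "\<pi> (p' y) = y" if "y \<in> carrier G" for y
    using bij that unfolding p'_def by (simp add: bij_betw_inv_into_right)
  have p'p: "p' (\<pi> x) = x" if "x \<in> carrier G" for x
    using bij that unfolding p'_def by (simp add: bij_betw_inv_into_left)
  have \<phi>car: "\<phi> t x \<in> carrier G" if "x \<in> carrier G" for t x
  proof -
    have "top_aut G T (\<phi> t)" using assms(2) by (simp add: linear_flow_def)
    then have "\<phi> t \<in> iso G G" by (simp add: top_aut_def)
    then show ?thesis using that by (auto simp: iso_def hom_def)
  qed
  have \<psi>car: "\<psi> t x \<in> carrier G" if "x \<in> carrier G" for t x
  proof -
    have "top_aut G T (\<psi> t)" using assms(3) by (simp add: linear_flow_def)
    then have "\<psi> t \<in> iso G G" by (simp add: top_aut_def)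
    then show ?thesis using that by (auto simp: iso_def hom_def)
  qed
  have comm: "p' (\<psi> t y) = \<phi> t (p' y)" if "y \<in> carrier G" for t y
    using assms(6)[OF that] unfolding p'_def by simp
  have one: "\<pi> \<one>\<^bsub>G\<^esub> = \<one>\<^bsub>G\<^esub>"
    using iso grp by (simp add: hom_one iso_def)
  let ?I1 = "{x \<in> carrier G. \<forall>t. \<phi> t x \<in> kernel G G h}"
  let ?I2 = "{y \<in> carrier G. \<forall>t. \<psi> t y \<in> kernel G G (h \<circ> p')}"
  have I2: "?I2 = \<pi> ` ?I1"
  proof (intro equalityI subsetI)
    fix y assume y: "y \<in> ?I2"
    then have yc: "y \<in> carrier G" by blast
    have "p' y \<in> ?I1"
      using y p'car[OF yc] comm[OF yc] \<phi>car \<psi>car p'car by (auto simp: kernel_def)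
    then show "y \<in> \<pi> ` ?I1" using pp'[OF yc] by (metis image_eqI)
  next
    fix y assume "y \<in> \<pi> ` ?I1"
    then obtain x where x: "x \<in> ?I1" "y = \<pi> x" by blast
    then have xc: "x \<in> carrier G" by blast
    have yc: "y \<in> carrier G" using x pcar by blast
    have "p' y = x" using x p'p by blast
    then show "y \<in> ?I2"
      using x yc comm[OF yc] \<psi>car by (auto simp: kernel_def)
  qed
  let ?F1 = "Fix G \<phi> \<inter> kernel G G h"
  let ?F2 = "Fix G \<psi> \<inter> kernel G G (h \<circ> p')"
  have F2: "?F2 = \<pi> ` ?F1"
  proof (intro equalityI subsetI)
    fix y assume y: "y \<in> ?F2"
    then have yc: "y \<in> carrier G" by (auto simp: Fix_def)
    have "p' y \<in> ?F1"
      using y p'car[OF yc] comm[OF yc] by (auto simp: kernel_def Fix_def)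
    then show "y \<in> \<pi> ` ?F1" using pp'[OF yc] by (metis image_eqI)
  next
    fix y assume "y \<in> \<pi> ` ?F1"
    then obtain x where x: "x \<in> ?F1" "y = \<pi> x" by blast
    then have xc: "x \<in> carrier G" by (auto simp: Fix_def)
    have yc: "y \<in> carrier G" using xc x pcar by blast
    have px: "p' y = x" using x xc p'p by blast
    have "\<psi> t y = y" for t
    proof -
      have "p' (\<psi> t y) = p' y" using comm[OF yc] px x by (auto simp: Fix_def)
      then have "\<pi> (p' (\<psi> t y)) = \<pi> (p' y)" by simp
      then show ?thesis using pp' yc \<psi>car by metis
    qed
    then show "y \<in> ?F2"
      using x yc px by (auto simp: kernel_def Fix_def)
  qed
  have inj: "inj_on \<pi> (carrier G)" using bij by (simp add: bij_betw_def)
  have sub1: "?I1 \<subseteq> topspace T" using top by auto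
  have "discrete_in T ?I1 \<longleftrightarrow> discrete_in T ?I2"
    using discrete_in_image[OF hom\<pi> sub1] I2 by simp
  moreover have "?F1 = {\<one>\<^bsub>G\<^esub>} \<longleftrightarrow> ?F2 = {\<one>\<^bsub>G\<^esub>}"
  proof
    assume "?F1 = {\<one>\<^bsub>G\<^esub>}" then show "?F2 = {\<one>\<^bsub>G\<^esub>}" using F2 one by simp
  next
    assume a: "?F2 = {\<one>\<^bsub>G\<^esub>}"
    have sub: "?F1 \<subseteq> carrier G" by (auto simp: Fix_def)
    have oc: "\<one>\<^bsub>G\<^esub> \<in> carrier G" using grp by (simp add: group.is_monoid monoid.one_closed)
    have "\<pi> ` ?F1 = \<pi> ` {\<one>\<^bsub>G\<^esub>}" using a F2 one by simp
    then show "?F1 = {\<one>\<^bsub>G\<^esub>}"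
      using inj_on_image_eq_iff[OF inj sub, of "{\<one>\<^bsub>G\<^esub>}"] oc by simp
  qed
  ultimately show ?thesis unfolding p'_def by simp
qed

end
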